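(* Let $f:\mathbb{R}^n\to\mathbb{R}^n$ and $G:\mathbb{R}^n\to\mathbb{R}^m$ be continuously differentiable, let $\mathcal M=\{x\in\mathbb{R}^n:G(x)=0\}$, and let $x_e\in\mathcal M$ be an equilibrium of $\dot x=f(x)$ such that $\frac{\partial G}{\partial x}(x_e)$ has full row rank. Let $\bar A=\frac{\partial f}{\partial x}(x_e)$ and $\bar{\mathbf V}=\{\bar x\in\mathbb{R}^n:\frac{\partial G}{\partial x}(x_e)\bar x=0\}$. If the linear system $\dot{\bar x}=\bar A\bar x$ restricted to $\bar{\mathbf V}$ is asymptotically stable, then the nonlinear system $\dot x=f(x)$ restricted to $\mathcal M$ is exponentially stable at $x_e$.
   Context: Linear restricted stability: $\dot{\bar x}=\bar A\bar x$ restricted to $\bar{\mathbf V}$ is asymptotically stable if every trajectory $\bar x(t)$ with $\bar x(t)\in\bar{\mathbf V}$ for all $t\ge0$ tends to $0$. Nonlinear restricted stability: $\dot x=f(x)$ restricted to $\mathcal M$ is exponentially stable at $x_e$ if there is a neighbourhood $B(x_e)$ of $x_e$ such that for every trajectory $x^*(t)$ of $\dot x=f(x)$ with $x^*(0)\in B(x_e)\cap\mathcal M$ and $x^*(t)\in\mathcal M$ for all $t\ge0$, there exist constants $\alpha,\beta>0$ with $\|x^*(t)-x_e\|\le\alpha e^{-\beta t}$ for all $t\ge0$. *)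

theory Defs
  imports "HOL-Analysis.Analysis"
begin

text \<open>A trajectory of xdot = F x on [0, infinity).\<close>
definition is_trajectory :: "(real^'n \<Rightarrow> real^'n) \<Rightarrow> (real \<Rightarrow> real^'n) \<Rightarrow> bool" where
  "is_trajectory F x \<longleftrightarrow>
     (\<forall>t\<ge>0. (x has_vector_derivative F (x t)) (at t within {0..}))"

text \<open>Linear restricted stability: xdot = A x restricted to V is asymptotically stable.\<close>
definition lin_restricted_asym_stable :: "real^'n^'n \<Rightarrow> (real^'n) set \<Rightarrow> bool" where
  "lin_restricted_asym_stable A V \<longleftrightarrow>
     (\<forall>x. is_trajectory (\<lambda>v. A *v v) x \<and> (\<forall>t\<ge>0. x t \<in> V) \<longrightarrow> (x \<longlongrightarrow> 0) at_top)"

text \<open>Nonlinear restricted exponential stability of xdot = f x restricted to M at xe.\<close>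
definition restricted_exp_stable :: "(real^'n \<Rightarrow> real^'n) \<Rightarrow> (real^'n) set \<Rightarrow> real^'n \<Rightarrow> bool" where
  "restricted_exp_stable f M xe \<longleftrightarrow>
     (\<exists>B. open B \<and> xe \<in> B \<and>
        (\<forall>x. is_trajectory f x \<and> x 0 \<in> B \<inter> M \<and> (\<forall>t\<ge>0. x t \<in> M) \<longrightarrow>
           (\<exists>\<alpha>>0. \<exists>\<beta>>0. \<forall>t\<ge>0. norm (x t - xe) \<le> \<alpha> * exp (- \<beta> * t))))"

end

theory Submission
  imports Defs
begin

definition Apow :: "real^'n^'n \<Rightarrow> nat \<Rightarrow> real^'n \<Rightarrow> real^'n" where
  "Apow A k = ((\<lambda>v. A *v v) ^^ k)"

lemma Apow_0[simp]: "Apow A 0 w = w" by (simp add: Apow_def)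
lemma Apow_Suc: "Apow A (Suc k) w = A *v Apow A k w" by (simp add: Apow_def)
lemma Apow_linear: "linear (Apow A k)"
proof (induction k)
  case 0 then show ?case by (simp add: Apow_def linear_id[unfolded id_def])
next
  case (Suc k)
  have "Apow A (Suc k) = (\<lambda>v. A *v v) \<circ> Apow A k" by (auto simp: Apow_Suc)
  then show ?case using linear_compose[OF Suc matrix_vector_mul_linear] by (simp add: o_def)
qed

lemma mat_bound: fixes A :: "real^'n^'m" shows "\<exists>a>0. \<forall>v. norm (A *v v) \<le> a * norm v"
  using bounded_linear.pos_bounded[OF matrix_vector_mul_bounded_linear, of A]
  by (auto simp: mult.commute)

lemma Apow_bound: assumes "\<And>v. norm (A *v v) \<le> a * norm v" "0 \<le> a"
  shows "norm (Apow A k w) \<le> a^k * norm w"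
proof (induction k)
  case 0 then show ?case by simp
next
  case (Suc k)
  have "norm (Apow A (Suc k) w) \<le> a * norm (Apow A k w)" using assms by (simp add: Apow_Suc)
  also have "\<dots> \<le> a * (a^k * norm w)" using Suc assms(2) by (rule mult_left_mono)
  finally show ?case by simp
qed

definition flow :: "real^'n^'n \<Rightarrow> real \<Rightarrow> real^'n \<Rightarrow> real^'n" where
  "flow A t w = (\<Sum>k. (t^k / fact k) *\<^sub>R Apow A k w)"

lemma flow_summable: "summable (\<lambda>k. (t^k / fact k) *\<^sub>R Apow A k w)"
proof -
  obtain a where a: "a > 0" "\<And>v. norm (A *v v) \<le> a * norm v" using mat_bound by blast
  have s: "summable (\<lambda>k. ((\<bar>t\<bar> * a)^k /\<^sub>R fact k) * norm w)"
    by (intro summable_mult2 summable_exp_generic)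
  show ?thesis
  proof (rule summable_comparison_test'[OF s])
    fix k :: nat
    have "norm ((t^k / fact k) *\<^sub>R Apow A k w) = (\<bar>t\<bar>^k / fact k) * norm (Apow A k w)"
      by (simp add: power_abs)
    also have "\<dots> \<le> (\<bar>t\<bar>^k / fact k) * (a^k * norm w)"
      by (intro mult_left_mono Apow_bound) (use a in auto)
    also have "\<dots> = ((\<bar>t\<bar> * a)^k /\<^sub>R fact k) * norm w"
      by (simp add: power_mult_distrib divide_inverse)
    finally show "norm ((t^k / fact k) *\<^sub>R Apow A k w) \<le> ((\<bar>t\<bar> * a)^k /\<^sub>R fact k) * norm w" .
  qed
qed

lemma flow_linear: fixes A :: "real^'n^'n" shows "linear (flow A t)"
proof (rule linearI)
  fix x y :: "real^'n" and c :: real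
  show "flow A t (x + y) = flow A t x + flow A t y"
    unfolding flow_def
    by (subst suminf_add[OF flow_summable flow_summable])
       (simp add: linear_add[OF Apow_linear] scaleR_add_right)
  show "flow A t (c *\<^sub>R x) = c *\<^sub>R flow A t x"
    unfolding flow_def
    using bounded_linear.suminf[OF bounded_linear_scaleR_right flow_summable, of c t A x]
    by (simp add: linear_scale[OF Apow_linear] mult.commute)
qed

lemma flow_0: "flow A 0 w = w"
proof -
  have "(\<lambda>k. ((0::real)^k / fact k) *\<^sub>R Apow A k w) = (\<lambda>k. if k = 0 then w else 0)"
    by auto
  then show ?thesis unfolding flow_def using sums_single[of 0 "\<lambda>_. w"] sums_unique by metis
qed

lemma flow_deriv: fixes A :: "real^'n^'n" shows "((\<lambda>t. flow A t w) has_vector_derivative (A *v flow A t w)) (at t)"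
  unfolding has_vector_derivative_def
  apply (subst has_derivative_componentwise_within)
proof
  fix b :: "real^'n" assume b: "b \<in> Basis"
  define c where "c k = (Apow A k w \<bullet> b) / fact k" for k
  have eq1: "flow A s w \<bullet> b = (\<Sum>k. c k * s^k)" for s
  proof -
    have "flow A s w \<bullet> b = (\<Sum>k. ((s^k / fact k) *\<^sub>R Apow A k w) \<bullet> b)"
      unfolding flow_def by (rule bounded_linear.suminf[OF bounded_linear_inner_left flow_summable])
    then show ?thesis by (simp add: c_def mult.commute)
  qed
  have sm: "summable (\<lambda>k. c k * y^k)" for y
  proof -
    have "summable (\<lambda>k. ((y^k / fact k) *\<^sub>R Apow A k w) \<bullet> b)"
      by (rule bounded_linear.summable[OF bounded_linear_inner_left flow_summable])
    then show ?thesis by (simp add: c_def mult.commute)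
  qed
  have D: "DERIV (\<lambda>s. \<Sum>k. c k * s^k) t :> (\<Sum>k. diffs c k * t^k)"
    by (rule termdiffs_strong_converges_everywhere[OF sm])
  have dc: "diffs c k = ((A *v Apow A k w) \<bullet> b) / fact k" for k
    by (simp add: diffs_def c_def Apow_Suc)
  have "(\<Sum>k. diffs c k * t^k) = (\<Sum>k. ((t^k / fact k) *\<^sub>R (A *v Apow A k w)) \<bullet> b)"
    by (simp add: dc mult.commute)
  also have "\<dots> = (\<Sum>k. (t^k / fact k) *\<^sub>R (A *v Apow A k w)) \<bullet> b"
  proof -
    have "summable (\<lambda>k. (t^k / fact k) *\<^sub>R (A *v Apow A k w))"
      using bounded_linear.summable[OF matrix_vector_mul_bounded_linear flow_summable, of A t A w]
      by (simp add: matrix_vector_mult_scaleR)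
    then show ?thesis
      by (rule bounded_linear.suminf[OF bounded_linear_inner_left, symmetric])
  qed
  also have "(\<Sum>k. (t^k / fact k) *\<^sub>R (A *v Apow A k w)) = A *v flow A t w"
    unfolding flow_def
    using bounded_linear.suminf[OF matrix_vector_mul_bounded_linear flow_summable, of A t A w]
    by (simp add: matrix_vector_mult_scaleR)
  finally have "DERIV (\<lambda>s. flow A s w \<bullet> b) t :> (A *v flow A t w) \<bullet> b"
    using D by (simp add: eq1)
  then show "((\<lambda>s. flow A s w \<bullet> b) has_derivative (\<lambda>h. (h *\<^sub>R (A *v flow A t w)) \<bullet> b)) (at t)"
    by (simp add: has_field_derivative_def mult.commute[of _ "(A *v flow A t w) \<bullet> b"])
qed

lemma inner_self_deriv:
  fixes e :: "real \<Rightarrow> 'a::real_inner"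
  assumes "(e has_vector_derivative d) (at u)"
  shows "((\<lambda>u. e u \<bullet> e u) has_real_derivative 2 * (e u \<bullet> d)) (at u)"
proof -
  have "((\<lambda>u. e u \<bullet> e u) has_derivative (\<lambda>h. e u \<bullet> (h *\<^sub>R d) + (h *\<^sub>R d) \<bullet> e u)) (at u)"
    using has_derivative_inner[OF assms[unfolded has_vector_derivative_def] assms[unfolded has_vector_derivative_def]] .
  moreover have "(\<lambda>h. e u \<bullet> (h *\<^sub>R d) + (h *\<^sub>R d) \<bullet> e u) = (*) (2 * (e u \<bullet> d))"
    by (auto simp: inner_commute)
  ultimately show ?thesis by (simp add: has_field_derivative_def)
qed

lemma gronwall_sq:
  fixes e :: "real \<Rightarrow> 'a::real_inner"
  assumes ab: "a \<le> b" and L: "L > 0" and c: "c \<ge> 0"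
    and cont: "continuous_on {a..b} e"
    and der: "\<And>u. a < u \<Longrightarrow> u < b \<Longrightarrow> (e has_vector_derivative e' u) (at u)"
    and ineq: "\<And>u. a < u \<Longrightarrow> u < b \<Longrightarrow> e u \<bullet> e' u \<le> L * (norm (e u))^2 + c"
  shows "(norm (e b))^2 \<le> exp (2*L*(b-a)) * ((norm (e a))^2 + 2*c*(b-a))"
proof -
  define \<phi> where "\<phi> u = exp (-2*L*(u-a)) * (e u \<bullet> e u) - 2*c*(u-a)" for u
  have "\<phi> b \<le> \<phi> a"
  proof (rule DERIV_nonpos_imp_decreasing_open[OF ab])
    fix u assume u: "a < u" "u < b"
    have d1: "((\<lambda>u. e u \<bullet> e u) has_real_derivative 2 * (e u \<bullet> e' u)) (at u)"
      by (rule inner_self_deriv[OF der[OF u]])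
    have d2: "((\<lambda>u. exp (-2*L*(u-a))) has_real_derivative exp (-2*L*(u-a)) * (-2*L)) (at u)"
      by (auto intro!: derivative_eq_intros)
    have d3: "((\<lambda>u. 2*c*(u-a)) has_real_derivative 2*c) (at u)"
      by (auto intro!: derivative_eq_intros)
    have D: "(\<phi> has_real_derivative exp (-2*L*(u-a)) * (-2*L) * (e u \<bullet> e u) + (2 * (e u \<bullet> e' u)) * exp (-2*L*(u-a)) - 2*c) (at u)"
      unfolding \<phi>_def by (rule DERIV_diff[OF DERIV_mult[OF d2 d1] d3])
    have ee: "e u \<bullet> e u = (norm (e u))^2" by (simp add: power2_norm_eq_inner)
    have ex1: "exp (-2*L*(u-a)) \<le> 1" using L u by simp
    have "exp (-2*L*(u-a)) * (-2*L) * (e u \<bullet> e u) + (2 * (e u \<bullet> e' u)) * exp (-2*L*(u-a))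
        = exp (-2*L*(u-a)) * (2 * (e u \<bullet> e' u - L * (norm (e u))^2))"
      by (simp add: ee algebra_simps)
    also have "\<dots> \<le> exp (-2*L*(u-a)) * (2 * c)"
      using ineq[OF u] by (intro mult_left_mono) auto
    also have "\<dots> \<le> 2 * c" using ex1 c by (simp add: mult_left_le_one_le)
    finally show "\<exists>y. (\<phi> has_real_derivative y) (at u) \<and> y \<le> 0"
      using D by (intro exI[of _ "exp (-2*L*(u-a)) * (-2*L) * (e u \<bullet> e u) + (2 * (e u \<bullet> e' u)) * exp (-2*L*(u-a)) - 2*c"]) auto
  next
    show "continuous_on {a..b} \<phi>"
      unfolding \<phi>_def by (intro continuous_intros cont)
  qed
  then have "exp (-2*L*(b-a)) * (norm (e b))^2 \<le> (norm (e a))^2 + 2*c*(b-a)"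
    by (simp add: \<phi>_def power2_norm_eq_inner)
  moreover have ee: "exp (2*L*(b-a)) * exp (-(2*L*(b-a))) = 1"
    by (simp add: exp_add[symmetric])
  ultimately have "exp (2*L*(b-a)) * (exp (-(2*L*(b-a))) * (norm (e b))^2) \<le> exp (2*L*(b-a)) * ((norm (e a))^2 + 2*c*(b-a))"
    by (intro mult_left_mono) auto
  moreover have "exp (2*L*(b-a)) * (exp (-(2*L*(b-a))) * (norm (e b))^2) = (norm (e b))^2"
    using ee by (simp add: mult.assoc[symmetric])
  ultimately show ?thesis by simp
qed

lemma lin_key:
  fixes A :: "real^'n^'n" and C :: "real^'n^'m"
  assumes H: "lin_restricted_asym_stable A {v. C *v v = 0}"
  shows "\<exists>T>0. \<exists>F. finite F \<and> F \<subseteq> {0..T} \<and>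
           (\<exists>K\<ge>0. \<forall>w. norm (flow A T w) \<le> 1/4 * norm w + K * (\<Sum>t\<in>F. norm (C *v flow A t w)))"
proof -
  define SF where "SF F = {w. \<forall>t\<in>F. C *v flow A t w = 0}" for F :: "real set"
  have linC: "linear (\<lambda>w. C *v flow A t w)" for t
    using linear_compose[OF flow_linear[of A t] matrix_vector_mul_linear[of C]] by (simp add: o_def)
  have subSF: "subspace (SF F)" for F
    unfolding subspace_def SF_def
    by (auto simp: linear_0[OF linC] linear_add[OF linC] linear_scale[OF linC])
  define W where "W = SF {0..}"
  have subW: "subspace W" unfolding W_def by (rule subSF)
  \<comment> \<open>decay on W\<close>
  have conv: "((\<lambda>t. flow A t w) \<longlongrightarrow> 0) at_top" if "w \<in> W" for w
  proof -
    have "is_trajectory (\<lambda>v. A *v v) (\<lambda>t. flow A t w)"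
      unfolding is_trajectory_def
      using flow_deriv has_vector_derivative_at_within by blast
    moreover have "\<forall>t\<ge>0. flow A t w \<in> {v. C *v v = 0}"
      using that by (auto simp: W_def SF_def)
    ultimately show ?thesis using H unfolding lin_restricted_asym_stable_def by blast
  qed
  obtain B where B: "B \<subseteq> W" "pairwise orthogonal B" "\<And>x. x \<in> B \<Longrightarrow> norm x = 1"
    "independent B" "span B = W"
    using orthonormal_basis_subspace[OF subW] by metis
  have finB: "finite B" using B(4) by (rule finiteI_independent)
  have "((\<lambda>t. \<Sum>b\<in>B. norm (flow A t b)) \<longlongrightarrow> (\<Sum>b\<in>B. norm (0::real^'n))) at_top"
    using B(1) conv by (intro tendsto_sum tendsto_norm) auto
  then have "\<forall>\<^sub>F t in at_top. (\<Sum>b\<in>B. norm (flow A t b)) < 1/4"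
    by (intro order_tendstoD) auto
  then obtain T0 where T0: "\<And>t. t \<ge> T0 \<Longrightarrow> (\<Sum>b\<in>B. norm (flow A t b)) < 1/4"
    by (auto simp: eventually_at_top_linorder)
  have decay: "norm (flow A t p) \<le> 1/4 * norm p" if "t \<ge> T0" "p \<in> W" for t p
  proof -
    have "p = (\<Sum>b\<in>B. (p \<bullet> b) *\<^sub>R b)"
      using orthonormal_basis_expand[OF B(2) B(3) _ finB] that B(5) by auto
    then have "flow A t p = (\<Sum>b\<in>B. (p \<bullet> b) *\<^sub>R flow A t b)"
      by (metis (no_types, lifting) flow_linear linear_scale linear_sum sum.cong)
    then have "norm (flow A t p) \<le> (\<Sum>b\<in>B. norm ((p \<bullet> b) *\<^sub>R flow A t b))"
      by (metis norm_sum)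
    also have "\<dots> \<le> (\<Sum>b\<in>B. norm p * norm (flow A t b))"
    proof (rule sum_mono)
      fix b assume "b \<in> B"
      then have "\<bar>p \<bullet> b\<bar> \<le> norm p" using Cauchy_Schwarz_ineq2[of p b] B(3) by simp
      then show "norm ((p \<bullet> b) *\<^sub>R flow A t b) \<le> norm p * norm (flow A t b)"
        by (simp add: mult_right_mono)
    qed
    also have "\<dots> = norm p * (\<Sum>b\<in>B. norm (flow A t b))" by (simp add: sum_distrib_left)
    also have "\<dots> \<le> norm p * (1/4)" using T0[OF that(1)] by (intro mult_left_mono) auto
    finally show ?thesis by simp
  qed
  \<comment> \<open>finitely many times\<close>
  obtain F0 where F0: "finite F0" "F0 \<subseteq> {0..}"
    and F0min: "\<And>F. finite F \<Longrightarrow> F \<subseteq> {0..} \<Longrightarrow> dim (SF F0) \<le> dim (SF F)"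
    using ex_has_least_nat[of "\<lambda>F. finite F \<and> F \<subseteq> {0::real..}" "{}" "\<lambda>F. dim (SF F)"] by auto
  have SFW: "SF F0 = W"
  proof
    show "W \<subseteq> SF F0" using F0(2) by (auto simp: W_def SF_def)
    show "SF F0 \<subseteq> W"
    proof
      fix w assume w: "w \<in> SF F0"
      show "w \<in> W" unfolding W_def SF_def
      proof (safe)
        fix t :: real assume t: "t \<ge> 0"
        have "dim (SF F0) \<le> dim (SF (insert t F0))"
          using F0min[of "insert t F0"] F0 t by auto
        then have "SF (insert t F0) = SF F0"
          by (intro subspace_dim_equal[OF subSF subSF]) (auto simp: SF_def)
        then show "C *v flow A t w = 0" using w by (auto simp: SF_def)
      qed
    qed
  qed
  define T where "T = max 1 (max T0 (Max (insert 0 F0)))"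
  have Tpos: "T > 0" by (simp add: T_def)
  have F0T: "F0 \<subseteq> {0..T}"
  proof
    fix t assume "t \<in> F0"
    then have "t \<le> Max (insert 0 F0)" "0 \<le> t" using F0 by auto
    then show "t \<in> {0..T}" by (auto simp: T_def)
  qed
  have T0T: "T0 \<le> T" by (simp add: T_def)
  define g where "g w = (\<Sum>t\<in>F0. norm (C *v flow A t w))" for w
  define Oc where "Oc = {q. \<forall>w\<in>W. q \<bullet> w = 0}"
  have subO: "subspace Oc" unfolding subspace_def Oc_def by (auto simp: inner_add_left)
  have gscale: "g (c *\<^sub>R q) = \<bar>c\<bar> * g q" for c q
    by (simp add: g_def linear_scale[OF linC] sum_distrib_left)
  have g0: "g q \<ge> 0" for q by (simp add: g_def sum_nonneg)
  have gcont: "continuous_on S g" for S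
    unfolding g_def
    by (intro continuous_intros linear_continuous_on) (simp add: linear_conv_bounded_linear[symmetric] linC)
  have "\<exists>c>0. \<forall>q\<in>Oc. c * norm q \<le> g q"
  proof (cases "Oc \<inter> sphere 0 1 = {}")
    case True
    have "q = 0" if "q \<in> Oc" for q
    proof (rule ccontr)
      assume "q \<noteq> 0"
      then have "q /\<^sub>R norm q \<in> Oc \<inter> sphere 0 1"
        using that subspace_scale[OF subO] by auto
      then show False using True by auto
    qed
    then show ?thesis using g0 by (intro exI[of _ 1]) force
  next
    case False
    have "compact (Oc \<inter> sphere 0 1)"
      by (intro closed_Int_compact closed_subspace subO compact_sphere)
    then obtain q0 where q0: "q0 \<in> Oc \<inter> sphere 0 1" "\<And>y. y \<in> Oc \<inter> sphere 0 1 \<Longrightarrow> g q0 \<le> g y"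
      using continuous_attains_inf[OF _ False gcont] by blast
    have "g q0 > 0"
    proof (rule ccontr)
      assume "\<not> g q0 > 0"
      then have "g q0 = 0" using g0[of q0] by simp
      then have "\<forall>t\<in>F0. norm (C *v flow A t q0) = 0"
        unfolding g_def using sum_nonneg_eq_0_iff[OF F0(1)] by (metis norm_ge_zero)
      then have "q0 \<in> W" using SFW by (auto simp: SF_def)
      then have "q0 \<bullet> q0 = 0" using q0(1) by (auto simp: Oc_def)
      then show False using q0(1) by simp
    qed
    moreover have "g q0 * norm q \<le> g q" if "q \<in> Oc" for q
    proof (cases "q = 0")
      case True then show ?thesis using g0 by simp
    next
      case False
      then have "q /\<^sub>R norm q \<in> Oc \<inter> sphere 0 1"
        using that subspace_scale[OF subO] by auto
      then have "g q0 \<le> g (q /\<^sub>R norm q)" by (rule q0(2))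
      also have "\<dots> = g q / norm q" using gscale[of "inverse (norm q)" q] by (simp add: divide_inverse mult.commute)
      finally show ?thesis using False by (simp add: field_simps)
    qed
    ultimately show ?thesis by (intro exI[of _ "g q0"]) (auto simp: mult.commute)
  qed
  then obtain c where c: "c > 0" "\<And>q. q \<in> Oc \<Longrightarrow> c * norm q \<le> g q" by blast
  obtain aT where aT: "aT > 0" "\<And>x. norm (flow A T x) \<le> aT * norm x"
    using bounded_linear.pos_bounded[of "flow A T"] flow_linear linear_conv_bounded_linear
    by (metis mult.commute)
  have main: "norm (flow A T w) \<le> 1/4 * norm w + (aT / c) * g w" for w
  proof -
    obtain y z where yz: "y \<in> span W" "\<And>u. u \<in> span W \<Longrightarrow> orthogonal z u" "w = y + z"
      using orthogonal_subspace_decomp_exists by blast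
    have yW: "y \<in> W" using yz(1) subW by (metis span_eq_iff)
    have zO: "z \<in> Oc" using yz(2) span_superset unfolding Oc_def orthogonal_def by blast
    have "orthogonal y z" using yz(2)[OF yz(1)] by (simp add: orthogonal_commute)
    then have "(norm w)^2 = (norm y)^2 + (norm z)^2" using yz(3) by (simp add: norm_add_Pythagorean)
    then have ny: "norm y \<le> norm w"
      by (metis abs_norm_cancel le_add_same_cancel1 real_le_rsqrt zero_le_power2 real_sqrt_abs)
    have gw: "g w = g z"
    proof -
      have "C *v flow A t y = 0" if "t \<in> F0" for t using yW that SFW by (auto simp: SF_def)
      then show ?thesis unfolding g_def yz(3)
        by (intro sum.cong) (auto simp: linear_add[OF linC])
    qed
    have "flow A T w = flow A T y + flow A T z" using yz(3) linear_add[OF flow_linear] by simp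
    then have "norm (flow A T w) \<le> norm (flow A T y) + norm (flow A T z)" by (simp add: norm_triangle_ineq)
    also have "\<dots> \<le> 1/4 * norm w + aT * norm z"
      using decay[OF T0T yW] ny aT(2)[of z] by linarith
    also have "aT * norm z \<le> (aT / c) * g z"
      using c(2)[OF zO] c(1) aT(1) by (simp add: field_simps)
    finally show ?thesis using gw by simp
  qed
  show ?thesis
    apply (rule exI[of _ T], rule conjI[OF Tpos], rule exI[of _ F0])
    using F0(1) F0T main c(1) aT(1) by (auto simp: g_def intro!: exI[of _ "aT / c"])
qed




lemma sq_to_norm:
  assumes "(norm v)^2 \<le> exp (2*L*h) * X^2" "X \<ge> 0"
  shows "norm v \<le> exp (L*h) * X"
proof -
  have e: "exp (2*L*h) = (exp (L*h))^2" by (metis exp_double mult.assoc)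
  have "exp (2*L*h) * X^2 = (exp (L*h) * X)^2"
    unfolding e by (rule power_mult_distrib[symmetric])
  then have "(norm v)^2 \<le> (exp (L*h) * X)^2" using assms(1) by simp
  moreover have "0 \<le> exp (L*h) * X" using assms(2) by simp
  ultimately show ?thesis by (rule power2_le_imp_le)
qed

lemma deriv_local:
  assumes "(g has_derivative g') (at x)" "e > 0"
  shows "\<exists>d>0. \<forall>y. norm (y - x) < d \<longrightarrow> norm (g y - g x - g' (y - x)) \<le> e * norm (y - x)"
proof -
  have bl: "bounded_linear g'" using assms(1) has_derivative_bounded_linear by blast
  obtain d where d: "d > 0" "\<And>y. 0 < norm (y - x) \<Longrightarrow> norm (y - x) < d \<Longrightarrow>
     norm (g y - g x - g' (y - x)) / norm (y - x) < e"
    using assms unfolding has_derivative_at' by blast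
  show ?thesis
  proof (intro exI[of _ d] conjI allI impI d(1))
    fix y assume y: "norm (y - x) < d"
    show "norm (g y - g x - g' (y - x)) \<le> e * norm (y - x)"
    proof (cases "y = x")
      case True then show ?thesis using linear_0[OF bounded_linear.linear[OF bl]] by simp
    next
      case False
      then have "0 < norm (y - x)" by simp
      with d(2)[OF this y] show ?thesis by (simp add: field_simps)
    qed
  qed
qed

lemma bound_step:
  fixes x :: "real \<Rightarrow> 'a::real_inner" and f :: "'a \<Rightarrow> 'a"
  assumes der: "\<And>u. u > s \<Longrightarrow> (x has_vector_derivative f (x u)) (at u)"
    and cont: "continuous_on {s..} x"
    and loc: "\<And>y. norm (y - xe) < \<delta> \<Longrightarrow> norm (f y) \<le> L * norm (y - xe)"
    and L: "L > 0" and T: "T \<ge> 0"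
    and small: "exp (L*T) * norm (x s - xe) < \<delta>"
  shows "\<forall>t\<in>{s..s+T}. norm (x t - xe) \<le> exp (L*(t-s)) * norm (x s - xe)"
proof -
  have gr: "norm (x t - xe) \<le> exp (L*(t-s)) * norm (x s - xe)"
    if t: "s \<le> t" and inside: "\<And>u. s < u \<Longrightarrow> u < t \<Longrightarrow> norm (x u - xe) < \<delta>" for t
  proof -
    have "(norm (x t - xe))^2 \<le> exp (2*L*(t-s)) * ((norm (x s - xe))^2 + 2*0*(t-s))"
    proof (rule gronwall_sq[where e="\<lambda>u. x u - xe" and e'="\<lambda>u. f (x u)", OF t L order_refl])
      show "continuous_on {s..t} (\<lambda>u. x u - xe)"
        by (rule continuous_on_diff[OF continuous_on_subset[OF cont] continuous_on_const]) auto
      fix u assume u: "s < u" "u < t"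
      show "((\<lambda>u. x u - xe) has_vector_derivative f (x u)) (at u)"
        using has_vector_derivative_diff[OF der[of u] has_vector_derivative_const[of xe]] u by simp
      have "(x u - xe) \<bullet> f (x u) \<le> norm (x u - xe) * norm (f (x u))" by (rule norm_cauchy_schwarz)
      also have "\<dots> \<le> norm (x u - xe) * (L * norm (x u - xe))"
        using loc[of "x u"] inside[OF u] by (intro mult_left_mono) auto
      finally show "(x u - xe) \<bullet> f (x u) \<le> L * (norm (x u - xe))^2 + 0"
        by (simp add: power2_eq_square mult_ac)
    qed
    then show ?thesis by (intro sq_to_norm) auto
  qed
  have inside: "\<forall>t\<in>{s..s+T}. norm (x t - xe) < \<delta>"
  proof (rule ccontr)
    assume nt: "\<not> (\<forall>t\<in>{s..s+T}. norm (x t - xe) < \<delta>)"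
    define Z where "Z = {s..s+T} \<inter> (\<lambda>t. norm (x t - xe)) -` {\<delta>..}"
    have Zne: "Z \<noteq> {}" using nt by (auto simp: Z_def not_less)
    have c1: "continuous_on {s..s+T} (\<lambda>t. norm (x t - xe))"
      by (rule continuous_on_norm[OF continuous_on_diff[OF continuous_on_subset[OF cont] continuous_on_const]]) auto
    have "closed Z" unfolding Z_def
      by (rule continuous_closed_preimage[OF c1 closed_atLeastAtMost closed_atLeast])
    moreover have "bdd_below Z" by (rule bdd_belowI[of _ s]) (auto simp: Z_def)
    ultimately have t1Z: "Inf Z \<in> Z" using Zne closed_contains_Inf by blast
    define t1 where "t1 = Inf Z"
    have t1: "s \<le> t1" "t1 \<le> s + T" "norm (x t1 - xe) \<ge> \<delta>" using t1Z by (auto simp: Z_def t1_def)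
    have below: "norm (x u - xe) < \<delta>" if "s < u" "u < t1" for u
    proof (rule ccontr)
      assume "\<not> norm (x u - xe) < \<delta>"
      then have "u \<in> Z" using that t1 by (auto simp: Z_def)
      then have "t1 \<le> u" unfolding t1_def using \<open>bdd_below Z\<close> by (rule cInf_lower)
      then show False using that by simp
    qed
    have "norm (x t1 - xe) \<le> exp (L*(t1-s)) * norm (x s - xe)" by (rule gr[OF t1(1) below])
    also have "\<dots> \<le> exp (L*T) * norm (x s - xe)"
      using t1 L by (intro mult_right_mono) auto
    also have "\<dots> < \<delta>" by (rule small)
    finally show False using t1(3) by simp
  qed
  show ?thesis
  proof
    fix t assume "t \<in> {s..s+T}"
    then show "norm (x t - xe) \<le> exp (L*(t-s)) * norm (x s - xe)"
      using inside by (intro gr) auto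
  qed
qed

lemma flow_shift_deriv:
  fixes A :: "real^'n^'n"
  shows "((\<lambda>u. flow A (u - s) w) has_vector_derivative A *v flow A (u - s) w) (at u)"
proof -
  have h: "((\<lambda>u. u - s) has_vector_derivative 1) (at u)"
    using has_vector_derivative_diff[OF has_vector_derivative_id has_vector_derivative_const[of s]] by simp
  show ?thesis
    using vector_diff_chain_at[OF h flow_deriv[of A w "u - s"]] by (simp add: o_def)
qed

lemma cmp_step:
  fixes x :: "real \<Rightarrow> real^'n" and f :: "real^'n \<Rightarrow> real^'n" and A :: "real^'n^'n"
  assumes der: "\<And>u. u > s \<Longrightarrow> (x has_vector_derivative f (x u)) (at u)"
    and cont: "continuous_on {s..} x"
    and T: "T \<ge> 0" and E: "E \<ge> 0" and eta: "\<eta> \<ge> 0"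
    and a: "a > 0" "\<And>v. norm (A *v v) \<le> a * norm v"
    and bnd: "\<And>t. t \<in> {s..s+T} \<Longrightarrow> norm (x t - xe) \<le> E * norm (x s - xe)"
    and rb: "\<And>t. t \<in> {s..s+T} \<Longrightarrow> norm (f (x t) - A *v (x t - xe)) \<le> \<eta> * norm (x t - xe)"
    and t: "t \<in> {s..s+T}"
  shows "norm (x t - xe - flow A (t - s) (x s - xe)) \<le> exp ((a+1)*T) * (\<eta> * E * norm (x s - xe) * (T+1))"
proof -
  define e0 where "e0 = x s - xe"
  define M where "M = \<eta> * E * norm e0"
  have M0: "M \<ge> 0" using E eta by (simp add: M_def)
  define d where "d u = x u - xe - flow A (u - s) e0" for u
  define d' where "d' u = f (x u) - A *v flow A (u - s) e0" for u
  have ts: "s \<le> t" "t \<le> s + T" using t by auto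
  have "(norm (d t))^2 \<le> exp (2*(a+1)*(t-s)) * ((norm (d s))^2 + 2*(M^2/2)*(t-s))"
  proof (rule gronwall_sq[where e'=d', OF ts(1)])
    show "a + 1 > 0" using a by simp
    show "M^2/2 \<ge> 0" by simp
    have cf: "continuous_on {s..t} (\<lambda>u. flow A (u - s) e0)"
      by (rule continuous_at_imp_continuous_on)
         (auto intro: has_vector_derivative_continuous[OF flow_shift_deriv])
    show "continuous_on {s..t} d"
      unfolding d_def
      by (rule continuous_on_diff[OF continuous_on_diff[OF continuous_on_subset[OF cont] continuous_on_const] cf]) auto
    fix u assume u: "s < u" "u < t"
    show "(d has_vector_derivative d' u) (at u)"
      unfolding d_def d'_def
      using has_vector_derivative_diff[OF has_vector_derivative_diff[OF der[of u] has_vector_derivative_const[of xe]] flow_shift_deriv[of A s e0 u]] u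
      by simp
    have uT: "u \<in> {s..s+T}" using u ts by auto
    define r where "r = f (x u) - A *v (x u - xe)"
    have rM: "norm r \<le> M"
    proof -
      have "norm r \<le> \<eta> * norm (x u - xe)" using rb[OF uT] by (simp add: r_def)
      also have "\<dots> \<le> \<eta> * (E * norm e0)" using bnd[OF uT] eta by (intro mult_left_mono) (auto simp: e0_def)
      finally show ?thesis by (simp add: M_def mult.assoc)
    qed
    have dd: "d' u = A *v d u + r"
      by (simp add: d_def d'_def r_def matrix_vector_mult_diff_distrib)
    have "d u \<bullet> d' u = d u \<bullet> (A *v d u) + d u \<bullet> r" by (simp add: dd inner_add_right)
    also have "\<dots> \<le> norm (d u) * norm (A *v d u) + norm (d u) * norm r"
      by (intro add_mono norm_cauchy_schwarz)
    also have "\<dots> \<le> norm (d u) * (a * norm (d u)) + norm (d u) * M"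
      by (intro add_mono mult_left_mono a(2) rM) auto
    also have "\<dots> \<le> (a+1) * (norm (d u))^2 + M^2/2"
    proof -
      define n where "n = norm (d u)"
      have h: "0 \<le> n^2 + M^2 - 2*n*M" using power2_diff[of n M] zero_le_power2[of "n-M"] by linarith
      have "0 \<le> n^2" by simp
      then have h2: "n * M \<le> n^2 + M^2/2" using h by linarith
      have e2: "n * (a * n) = a * n^2" by (simp add: power2_eq_square mult_ac)
      have e3: "(a+1) * n^2 = a * n^2 + n^2" by (simp add: distrib_right)
      have "n * (a * n) + n * M \<le> (a+1) * n^2 + M^2/2" using h2 e2 e3 by linarith
      then show ?thesis unfolding n_def .
    qed
    finally show "d u \<bullet> d' u \<le> (a+1) * (norm (d u))^2 + M^2/2" .
  qed
  moreover have "d s = 0" by (simp add: d_def flow_0 e0_def)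
  ultimately have "(norm (d t))^2 \<le> exp (2*(a+1)*(t-s)) * (M^2 * (t-s))" by simp
  also have "\<dots> \<le> exp (2*(a+1)*T) * (M * (T+1))^2"
  proof (rule mult_mono)
    show "exp (2*(a+1)*(t-s)) \<le> exp (2*(a+1)*T)" using ts a by simp
    have "(T+1)^2 = T^2 + 2*T + 1" by (simp add: power2_eq_square algebra_simps)
    moreover have "0 \<le> T^2" by simp
    ultimately have "t - s \<le> (T+1)^2" using ts T by linarith
    then show "M^2 * (t-s) \<le> (M * (T+1))^2"
      by (simp add: power_mult_distrib mult_left_mono)
  qed (use ts in auto)
  finally have "norm (d t) \<le> exp ((a+1)*T) * (M * (T+1))"
    using M0 T by (intro sq_to_norm) (auto simp: mult.assoc)
  then show ?thesis by (simp add: d_def e0_def M_def mult.assoc)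
qed
lemma exp_from_steps:
  fixes n :: "real \<Rightarrow> real"
  assumes T: "T > 0" and E: "E \<ge> 1"
    and nn: "\<And>t. t \<ge> 0 \<Longrightarrow> n t \<ge> 0"
    and step: "\<And>s. s \<ge> 0 \<Longrightarrow> n s \<le> \<rho> \<Longrightarrow> (\<forall>t\<in>{s..s+T}. n t \<le> E * n s) \<and> n (s+T) \<le> 1/2 * n s"
    and n0: "n 0 \<le> \<rho>"
  shows "\<exists>\<alpha>>0. \<exists>\<beta>>0. \<forall>t\<ge>0. n t \<le> \<alpha> * exp (-\<beta>*t)"
proof -
  have n00: "n 0 \<ge> 0" using nn by simp
  have kk: "n (real k * T) \<le> (1/2)^k * n 0" for k :: nat
  proof (induction k)
    case 0 then show ?case by simp
  next
    case (Suc k)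
    have s0: "real k * T \<ge> 0" using T by simp
    have "(1/2::real)^k \<le> 1" by (simp add: power_le_one)
    then have "(1/2)^k * n 0 \<le> n 0" using n00 by (simp add: mult_left_le_one_le)
    then have "n (real k * T) \<le> \<rho>" using Suc n0 by linarith
    then have "n (real k * T + T) \<le> 1/2 * n (real k * T)" using step[OF s0] by blast
    also have "\<dots> \<le> 1/2 * ((1/2)^k * n 0)" using Suc by simp
    finally show ?case by (simp add: algebra_simps)
  qed
  define \<beta> where "\<beta> = ln 2 / T"
  define \<alpha> where "\<alpha> = 2 * E * n 0 + 1"
  have \<beta>: "\<beta> > 0" using T by (simp add: \<beta>_def)
  have "0 \<le> E * n 0" using E n00 by simp
  then have \<alpha>: "\<alpha> > 0" by (simp add: \<alpha>_def)
  have "\<forall>t\<ge>0. n t \<le> \<alpha> * exp (-\<beta>*t)"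
  proof (intro allI impI)
    fix t :: real assume t: "t \<ge> 0"
    define k where "k = nat \<lfloor>t / T\<rfloor>"
    have tT: "t / T \<ge> 0" using t T by simp
    have k1: "real k \<le> t / T" "t / T < real k + 1"
      using tT by (simp_all add: k_def)
    have s: "real k * T \<le> t" "t \<le> real k * T + T"
      using k1 T by (simp_all add: field_simps)
    have s0: "real k * T \<ge> 0" using T by simp
    have "(1/2::real)^k \<le> 1" by (simp add: power_le_one)
    then have "(1/2)^k * n 0 \<le> n 0" using n00 by (simp add: mult_left_le_one_le)
    then have "n (real k * T) \<le> \<rho>" using kk[of k] n0 by linarith
    then have "n t \<le> E * n (real k * T)" using step[OF s0] s by auto
    also have "\<dots> \<le> E * ((1/2)^k * n 0)" using kk[of k] E by (intro mult_left_mono) auto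
    also have "(1/2::real)^k \<le> 2 * exp (-\<beta>*t)"
    proof -
      have "(1/2::real)^k = exp (real k * ln (1/2))"
        by (simp add: exp_of_nat_mult)
      also have "real k * ln (1/2) = - (ln 2 * real k)" by (simp add: ln_div)
      also have "- (ln 2 * real k) \<le> ln 2 - \<beta> * t"
      proof -
        have "t / T - 1 \<le> real k" using k1 by linarith
        then have "ln 2 * (t / T - 1) \<le> ln 2 * real k" by (intro mult_left_mono) auto
        then show ?thesis by (simp add: \<beta>_def algebra_simps)
      qed
      then have "exp (- (ln 2 * real k)) \<le> exp (ln 2 - \<beta> * t)" by simp
      also have "exp (ln 2 - \<beta> * t) = 2 * exp (-\<beta>*t)" by (simp add: exp_diff exp_minus divide_inverse)
      finally show ?thesis .
    qed
    then have "E * ((1/2)^k * n 0) \<le> E * ((2 * exp (-\<beta>*t)) * n 0)"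
      using E n00 by (intro mult_left_mono mult_right_mono) auto
    also have "\<dots> = (2 * E * n 0) * exp (-\<beta>*t)" by simp
    also have "\<dots> \<le> \<alpha> * exp (-\<beta>*t)" by (intro mult_right_mono) (auto simp: \<alpha>_def)
    finally show "n t \<le> \<alpha> * exp (-\<beta>*t)" .
  qed
  then show ?thesis using \<alpha> \<beta> by blast
qed

theorem theorem3:
  fixes f :: "real^'n \<Rightarrow> real^'n" and G :: "real^'n \<Rightarrow> real^'m"
    and Df :: "real^'n \<Rightarrow> real^'n^'n" and DG :: "real^'n \<Rightarrow> real^'n^'m"
    and xe :: "real^'n"
  assumes f_deriv: "\<And>x. (f has_derivative (\<lambda>h. Df x *v h)) (at x)"
    and Df_cont: "continuous_on UNIV Df"
    and G_deriv: "\<And>x. (G has_derivative (\<lambda>h. DG x *v h)) (at x)"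
    and DG_cont: "continuous_on UNIV DG"
    and xe_M: "G xe = 0"
    and equil: "f xe = 0"
    and full_rank: "rank (DG xe) = CARD('m)"
    and lin_stable: "lin_restricted_asym_stable (Df xe) {v. DG xe *v v = 0}"
  shows "restricted_exp_stable f {x. G x = 0} xe"
proof -
  define A where "A = Df xe"
  define C where "C = DG xe"
  obtain T F K where T: "T > 0" and F: "finite F" "F \<subseteq> {0..T}" and K: "K \<ge> 0"
    and lin: "\<And>w. norm (flow A T w) \<le> 1/4 * norm w + K * (\<Sum>t\<in>F. norm (C *v flow A t w))"
    using lin_key[OF lin_stable[folded A_def C_def]] by blast
  obtain a where a: "a > 0" "\<And>v. norm (A *v v) \<le> a * norm v" using mat_bound by blast
  obtain cC where cC: "cC > 0" "\<And>v. norm (C *v v) \<le> cC * norm v" using mat_bound by blast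
  define L where "L = a + 1"
  define E where "E = exp (L * T)"
  have L: "L > 0" using a by (simp add: L_def)
  have E1: "E \<ge> 1" using L T by (simp add: E_def)
  define Q where "Q = K * real (card F) * (E + cC * (E * E * (T+1))) + E * E * (T+1)"
  have Q0: "Q \<ge> 0" using K cC E1 T by (simp add: Q_def)
  define \<eta> where "\<eta> = min 1 (1 / (4 * (Q + 1)))"
  have \<eta>0: "\<eta> > 0" using Q0 by (simp add: \<eta>_def)
  have \<eta>1: "\<eta> \<le> 1" by (simp add: \<eta>_def)
  have \<eta>Q: "\<eta> * Q \<le> 1/4"
  proof -
    have "\<eta> * Q \<le> (1 / (4 * (Q + 1))) * Q" using Q0 by (intro mult_right_mono) (auto simp: \<eta>_def)
    also have "\<dots> = Q / (4 * (Q + 1))" by simp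
    also have "\<dots> \<le> 1/4" using Q0 by (simp add: field_simps)
    finally show ?thesis .
  qed
  obtain \<delta>1 where \<delta>1: "\<delta>1 > 0" "\<And>y. norm (y - xe) < \<delta>1 \<Longrightarrow> norm (f y - f xe - A *v (y - xe)) \<le> \<eta> * norm (y - xe)"
    using deriv_local[OF f_deriv[of xe] \<eta>0] unfolding A_def by blast
  obtain \<delta>2 where \<delta>2: "\<delta>2 > 0" "\<And>y. norm (y - xe) < \<delta>2 \<Longrightarrow> norm (G y - G xe - C *v (y - xe)) \<le> \<eta> * norm (y - xe)"
    using deriv_local[OF G_deriv[of xe] \<eta>0] unfolding C_def by blast
  define \<delta> where "\<delta> = min \<delta>1 \<delta>2"
  have \<delta>: "\<delta> > 0" using \<delta>1 \<delta>2 by (simp add: \<delta>_def)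
  define \<rho> where "\<rho> = \<delta> / (2 * E)"
  have \<rho>: "\<rho> > 0" using \<delta> E1 by (simp add: \<rho>_def)
  have fr: "norm (f y - A *v (y - xe)) \<le> \<eta> * norm (y - xe)" if "norm (y - xe) < \<delta>" for y
    using \<delta>1(2)[of y] that equil by (simp add: \<delta>_def)
  have Gr: "norm (G y - C *v (y - xe)) \<le> \<eta> * norm (y - xe)" if "norm (y - xe) < \<delta>" for y
    using \<delta>2(2)[of y] that xe_M by (simp add: \<delta>_def)
  have loc: "norm (f y) \<le> L * norm (y - xe)" if "norm (y - xe) < \<delta>" for y
  proof -
    have "norm (f y) \<le> norm (A *v (y - xe)) + norm (f y - A *v (y - xe))"
      by (metis add.commute diff_add_cancel norm_triangle_ineq)
    also have "\<dots> \<le> a * norm (y - xe) + 1 * norm (y - xe)"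
      using a(2)[of "y - xe"] fr[OF that] \<eta>1 mult_right_mono[OF \<eta>1 norm_ge_zero[of "y - xe"]]
      by linarith
    finally show ?thesis by (simp add: L_def distrib_right)
  qed
  show ?thesis
    unfolding restricted_exp_stable_def
  proof (intro exI[of _ "ball xe \<rho>"] conjI allI impI)
    show "open (ball xe \<rho>)" by simp
    show "xe \<in> ball xe \<rho>" using \<rho> by simp
    fix x assume hx: "is_trajectory f x \<and> x 0 \<in> ball xe \<rho> \<inter> {x. G x = 0} \<and> (\<forall>t\<ge>0. x t \<in> {x. G x = 0})"
    have derw: "(x has_vector_derivative f (x t)) (at t within {0..})" if "t \<ge> 0" for t
      using hx that unfolding is_trajectory_def by blast
    have derx: "(x has_vector_derivative f (x u)) (at u)" if "u > 0" for u
    proof -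
      have "u \<in> interior {0..}" using that by simp
      then show ?thesis using derw[of u] that at_within_interior by fastforce
    qed
    have cont0: "continuous_on {0..} x"
      unfolding continuous_on_eq_continuous_within
      using derw has_vector_derivative_continuous by blast
    have GM: "G (x t) = 0" if "t \<ge> 0" for t using hx that by blast
    have step: "(\<forall>t\<in>{s..s+T}. norm (x t - xe) \<le> E * norm (x s - xe)) \<and> norm (x (s+T) - xe) \<le> 1/2 * norm (x s - xe)"
      if s: "s \<ge> 0" and sr: "norm (x s - xe) \<le> \<rho>" for s
    proof -
      define e0 where "e0 = x s - xe"
      have ders: "\<And>u. u > s \<Longrightarrow> (x has_vector_derivative f (x u)) (at u)" using derx s by simp
      have conts: "continuous_on {s..} x" using continuous_on_subset[OF cont0] s by auto
      have Ee0: "E * norm e0 \<le> \<delta> / 2"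
      proof -
        have "E * norm e0 \<le> E * \<rho>" using sr E1 by (simp add: e0_def)
        also have "\<dots> = \<delta> / 2" using E1 by (simp add: \<rho>_def)
        finally show ?thesis .
      qed
      have small: "exp (L*T) * norm (x s - xe) < \<delta>"
        using Ee0 \<delta> by (simp add: E_def e0_def)
      have bs: "\<forall>t\<in>{s..s+T}. norm (x t - xe) \<le> exp (L*(t-s)) * norm (x s - xe)"
        by (rule bound_step[OF ders conts loc L less_imp_le[OF T] small])
      have bnd: "norm (x t - xe) \<le> E * norm (x s - xe)" if "t \<in> {s..s+T}" for t
      proof -
        have "norm (x t - xe) \<le> exp (L*(t-s)) * norm (x s - xe)" using bs that by blast
        also have "\<dots> \<le> E * norm (x s - xe)"
          using that L by (intro mult_right_mono) (auto simp: E_def)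
        finally show ?thesis .
      qed
      have ins: "norm (x t - xe) < \<delta>" if "t \<in> {s..s+T}" for t
        using bnd[OF that] Ee0 \<delta> by (simp add: e0_def)
      have rb: "norm (f (x t) - A *v (x t - xe)) \<le> \<eta> * norm (x t - xe)" if "t \<in> {s..s+T}" for t
        by (rule fr[OF ins[OF that]])
      have cmp: "norm (x t - xe - flow A (t - s) e0) \<le> E * (\<eta> * E * norm e0 * (T+1))"
        if "t \<in> {s..s+T}" for t
        using cmp_step[OF ders conts less_imp_le[OF T] _ less_imp_le[OF \<eta>0] a bnd rb that] E1
        by (simp add: E_def L_def e0_def)
      have Cb: "norm (C *v flow A \<tau> e0) \<le> \<eta> * norm e0 * (E + cC * (E * E * (T+1)))" if "\<tau> \<in> F" for \<tau>
      proof -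
        have \<tau>: "s + \<tau> \<in> {s..s+T}" using that F by auto
        define d where "d = x (s+\<tau>) - xe - flow A \<tau> e0"
        have dd: "norm d \<le> E * (\<eta> * E * norm e0 * (T+1))" using cmp[OF \<tau>] by (simp add: d_def)
        have "C *v flow A \<tau> e0 = C *v (x (s+\<tau>) - xe) - C *v d"
          by (simp add: d_def matrix_vector_mult_diff_distrib)
        then have "norm (C *v flow A \<tau> e0) \<le> norm (C *v (x (s+\<tau>) - xe)) + norm (C *v d)"
          by (simp add: norm_triangle_ineq4)
        also have "norm (C *v (x (s+\<tau>) - xe)) \<le> \<eta> * (E * norm e0)"
        proof -
          have "norm (C *v (x (s+\<tau>) - xe)) = norm (G (x (s+\<tau>)) - C *v (x (s+\<tau>) - xe))"
            using GM[of "s+\<tau>"] \<tau> s by simp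
          also have "\<dots> \<le> \<eta> * norm (x (s+\<tau>) - xe)" by (rule Gr[OF ins[OF \<tau>]])
          also have "\<dots> \<le> \<eta> * (E * norm e0)"
            using bnd[OF \<tau>] \<eta>0 by (intro mult_left_mono) (auto simp: e0_def)
          finally show ?thesis .
        qed
        also have "norm (C *v d) \<le> cC * (E * (\<eta> * E * norm e0 * (T+1)))"
          using cC(2)[of d] dd cC(1) by (meson mult_left_mono less_imp_le order_trans)
        finally show ?thesis by (simp add: algebra_simps)
      qed
      have sumb: "(\<Sum>t\<in>F. norm (C *v flow A t e0)) \<le> real (card F) * (\<eta> * norm e0 * (E + cC * (E * E * (T+1))))"
        using sum_bounded_above[of F "\<lambda>t. norm (C *v flow A t e0)", OF Cb] by simp
      have "x (s+T) - xe = flow A T e0 + (x (s+T) - xe - flow A ((s+T) - s) e0)" by simp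
      then have "norm (x (s+T) - xe) \<le> norm (flow A T e0) + norm (x (s+T) - xe - flow A ((s+T) - s) e0)"
        by (metis norm_triangle_ineq)
      also have "\<dots> \<le> (1/4 * norm e0 + K * (real (card F) * (\<eta> * norm e0 * (E + cC * (E * E * (T+1))))))
          + E * (\<eta> * E * norm e0 * (T+1))"
        using lin[of e0] mult_left_mono[OF sumb K] cmp[of "s+T"] T by (intro add_mono) auto
      also have "\<dots> = 1/4 * norm e0 + (\<eta> * Q) * norm e0" by (simp add: Q_def algebra_simps)
      also have "\<dots> \<le> 1/4 * norm e0 + 1/4 * norm e0" using \<eta>Q by (intro add_left_mono mult_right_mono) auto
      finally have "norm (x (s+T) - xe) \<le> 1/2 * norm (x s - xe)" by (simp add: e0_def)
      then show ?thesis using bnd by blast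
    qed
    have n0: "norm (x 0 - xe) \<le> \<rho>" using hx by (auto simp: dist_norm norm_minus_commute)
    show "\<exists>\<alpha>>0. \<exists>\<beta>>0. \<forall>t\<ge>0. norm (x t - xe) \<le> \<alpha> * exp (- \<beta> * t)"
      by (rule exp_from_steps[OF T E1 _ step n0]) auto
  qed
qed


end
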